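(* Let $\{e_j\}_{j\in\mathbb N}$ be a complete orthonormal system in $L$, $L_0:=\operatorname{span}\{e_j: j\in\mathbb N\}$ (finite linear combinations), and let $B:L_0\to L$ be a linear operator. Put $d\Gamma_M(B):=\sum_{j=1}^M a^\dagger(Be_j)a(\bar e_j)$. If the operators $d\Gamma_M(B)$ converge strongly on all of $\mathcal F^{(1)}$ as $M\to\infty$, then $B$ is bounded on $L_0$, i.e. $\sup\{\|Bf\|: f\in L_0,\ \|f\|=1\}<\infty$.
   Context: $L$ is a separable complex Hilbert space with $\dim L=\infty$, scalar product antilinear in the first argument, and a conjugation $f\mapsto\bar f$ (antilinear involution with $(\bar f,\bar g)=(g,f)$). $\mathcal F$ carries a Fock representation of the CCR over $L$: on a dense invariant domain $D$ there are operators $a(f),a^\dagger(f)$, linear in $f$, with $[a(f),a(g)]=0=[a^\dagger(f),a^\dagger(g)]$, $[a(f),a^\dagger(g)]=(\bar f,g)\mathrm{id}$, $(a(f)\Phi,\Psi)=(\Phi,a^\dagger(\bar f)\Psi)$, a unit vacuum $\Omega$ with $a(f)\Omega=0$, and $\mathcal F$ is the closure of the span of all vectors $a^\dagger(f_n)\cdots a^\dagger(f_1)\Omega$. $\mathcal F^{(1)}$ is the closure of $\{a^\dagger(f)\Omega: f\in L\}$; $a(f),a^\dagger(f)$ extend to bounded operators from the closed $n$-particle space to the $(n\mp1)$-particle space, which are used. *)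

theory Defs
  imports "HOL-Analysis.Analysis"
begin

text \<open>The distribution has no complex vector spaces / complex inner products, so we
introduce minimal classes. The inner product is antilinear in the first argument.\<close>

class complex_vector = real_vector +
  fixes scaleC :: "complex \<Rightarrow> 'a \<Rightarrow> 'a"  (infixr \<open>*\<^sub>C\<close> 75)
  assumes scaleC_add_right: "c *\<^sub>C (x + y) = c *\<^sub>C x + c *\<^sub>C y"
    and scaleC_add_left: "(c + d) *\<^sub>C x = c *\<^sub>C x + d *\<^sub>C x"
    and scaleC_scaleC: "c *\<^sub>C (d *\<^sub>C x) = (c * d) *\<^sub>C x"
    and scaleC_one: "1 *\<^sub>C x = x"
    and scaleR_scaleC: "r *\<^sub>R x = complex_of_real r *\<^sub>C x"

class complex_inner = complex_vector + real_normed_vector +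
  fixes cinner :: "'a \<Rightarrow> 'a \<Rightarrow> complex"
  assumes cinner_commute: "cinner x y = cnj (cinner y x)"
    and cinner_add_right: "cinner x (y + z) = cinner x y + cinner x z"
    and cinner_scaleC_right: "cinner x (c *\<^sub>C y) = c * cinner x y"
    and norm_cinner: "complex_of_real ((norm x)\<^sup>2) = cinner x x"

class chilbert_space = complex_inner + complete_space

definition cspan :: "'a::complex_vector set \<Rightarrow> 'a set" where
  "cspan S = {x. \<exists>A c. finite A \<and> A \<subseteq> S \<and> x = (\<Sum>a\<in>A. c a *\<^sub>C a)}"

definition separable_space :: "'a::metric_space itself \<Rightarrow> bool" where
  "separable_space _ \<longleftrightarrow> (\<exists>S::'a set. countable S \<and> closure S = UNIV)"

definition infinite_dimensional :: "'a::complex_vector itself \<Rightarrow> bool" where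
  "infinite_dimensional _ \<longleftrightarrow> (\<forall>S::'a set. finite S \<longrightarrow> cspan S \<noteq> UNIV)"

definition complete_orthonormal_system :: "(nat \<Rightarrow> 'a::complex_inner) \<Rightarrow> bool" where
  "complete_orthonormal_system e \<longleftrightarrow>
     (\<forall>i j. cinner (e i) (e j) = (if i = j then 1 else 0)) \<and>
     closure (cspan (range e)) = UNIV"

definition conjugation :: "('a::complex_inner \<Rightarrow> 'a) \<Rightarrow> bool" where
  "conjugation J \<longleftrightarrow>
     (\<forall>f g. J (f + g) = J f + J g) \<and>
     (\<forall>c f. J (c *\<^sub>C f) = cnj c *\<^sub>C J f) \<and>
     (\<forall>f. J (J f) = f) \<and>
     (\<forall>f g. cinner (J f) (J g) = cinner g f)"

definition creation_vector :: "('l \<Rightarrow> 'f \<Rightarrow> 'f) \<Rightarrow> 'f \<Rightarrow> 'l list \<Rightarrow> 'f" where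
  "creation_vector adag \<Omega> fs = foldr (\<lambda>f \<psi>. adag f \<psi>) fs \<Omega>"

definition fock_rep ::
  "('l::chilbert_space \<Rightarrow> 'l) \<Rightarrow> 'f::chilbert_space set \<Rightarrow> ('l \<Rightarrow> 'f \<Rightarrow> 'f) \<Rightarrow> ('l \<Rightarrow> 'f \<Rightarrow> 'f) \<Rightarrow> 'f \<Rightarrow> bool"
  where
  "fock_rep J D a adag \<Omega> \<longleftrightarrow>
     \<comment> \<open>D is a dense linear subspace, invariant under all a(f), adag(f)\<close>
     0 \<in> D \<and> (\<forall>\<phi>\<in>D. \<forall>\<psi>\<in>D. \<phi> + \<psi> \<in> D) \<and> (\<forall>c. \<forall>\<psi>\<in>D. c *\<^sub>C \<psi> \<in> D) \<and>
     closure D = UNIV \<and>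
     (\<forall>f. \<forall>\<psi>\<in>D. a f \<psi> \<in> D \<and> adag f \<psi> \<in> D) \<and>
     \<comment> \<open>the operators are linear on D\<close>
     (\<forall>f. \<forall>\<phi>\<in>D. \<forall>\<psi>\<in>D. a f (\<phi> + \<psi>) = a f \<phi> + a f \<psi> \<and> adag f (\<phi> + \<psi>) = adag f \<phi> + adag f \<psi>) \<and>
     (\<forall>f c. \<forall>\<psi>\<in>D. a f (c *\<^sub>C \<psi>) = c *\<^sub>C a f \<psi> \<and> adag f (c *\<^sub>C \<psi>) = c *\<^sub>C adag f \<psi>) \<and>
     \<comment> \<open>linear in the test vector f\<close>
     (\<forall>f g. \<forall>\<psi>\<in>D. a (f + g) \<psi> = a f \<psi> + a g \<psi> \<and> adag (f + g) \<psi> = adag f \<psi> + adag g \<psi>) \<and>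
     (\<forall>c f. \<forall>\<psi>\<in>D. a (c *\<^sub>C f) \<psi> = c *\<^sub>C a f \<psi> \<and> adag (c *\<^sub>C f) \<psi> = c *\<^sub>C adag f \<psi>) \<and>
     \<comment> \<open>canonical commutation relations on D\<close>
     (\<forall>f g. \<forall>\<psi>\<in>D. a f (a g \<psi>) = a g (a f \<psi>)) \<and>
     (\<forall>f g. \<forall>\<psi>\<in>D. adag f (adag g \<psi>) = adag g (adag f \<psi>)) \<and>
     (\<forall>f g. \<forall>\<psi>\<in>D. a f (adag g \<psi>) - adag g (a f \<psi>) = cinner (J f) g *\<^sub>C \<psi>) \<and>
     \<comment> \<open>adjointness: (a(f) Phi, Psi) = (Phi, adag(J f) Psi)\<close>
     (\<forall>f. \<forall>\<phi>\<in>D. \<forall>\<psi>\<in>D. cinner (a f \<phi>) \<psi> = cinner \<phi> (adag (J f) \<psi>)) \<and>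
     \<comment> \<open>unit vacuum annihilated by all a(f)\<close>
     \<Omega> \<in> D \<and> norm \<Omega> = 1 \<and> (\<forall>f. a f \<Omega> = 0) \<and>
     \<comment> \<open>cyclicity of the vacuum\<close>
     closure (cspan (range (creation_vector adag \<Omega>))) = UNIV"

definition one_particle_space :: "('l \<Rightarrow> 'f \<Rightarrow> 'f) \<Rightarrow> 'f \<Rightarrow> 'f::metric_space set" where
  "one_particle_space adag \<Omega> = closure (range (\<lambda>f. adag f \<Omega>))"

text \<open>d Gamma_M(B) = sum_{j=1}^M adag(B e_j) a(J e_j); indices here run over j < M with
e indexed from 0.\<close>
definition dGamma_M ::
  "('l \<Rightarrow> 'l) \<Rightarrow> ('l \<Rightarrow> 'f \<Rightarrow> 'f) \<Rightarrow> ('l \<Rightarrow> 'f \<Rightarrow> 'f) \<Rightarrow> (nat \<Rightarrow> 'l) \<Rightarrow> ('l::complex_vector \<Rightarrow> 'l)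
     \<Rightarrow> nat \<Rightarrow> 'f \<Rightarrow> 'f::complex_vector" where
  "dGamma_M J a adag e B M \<psi> = (\<Sum>j<M. adag (B (e j)) (a (J (e j)) \<psi>))"

end

theory Submission imports Defs begin

lemma cinner_add_left: "cinner (x + y) z = cinner x z + cinner y (z::'a::complex_inner)"
  using cinner_commute[of "x+y" z] cinner_commute[of x z] cinner_commute[of y z]
  by (simp add: cinner_add_right)
lemma cinner_scaleC_left: "cinner (c *\<^sub>C x) (y::'a::complex_inner) = cnj c * cinner x y"
  using cinner_commute[of "c *\<^sub>C x" y] cinner_commute[of x y]
  by (simp add: cinner_scaleC_right)
lemma scaleC_zero_left: "0 *\<^sub>C (x::'a::complex_vector) = 0"
  by (metis scaleR_scaleC scaleR_zero_left of_real_0)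
lemma scaleC_minus1: "(-1) *\<^sub>C (x::'a::complex_vector) = - x"
  by (metis scaleR_scaleC scaleR_minus1_left of_real_1 of_real_minus)
lemma scaleC_diff_left: "(c - d) *\<^sub>C (x::'a::complex_vector) = c *\<^sub>C x - d *\<^sub>C x"
proof -
  have "(c - d) *\<^sub>C x + d *\<^sub>C x = c *\<^sub>C x" by (metis scaleC_add_left diff_add_cancel)
  then show ?thesis by (metis add_diff_cancel)
qed
lemma scaleC_zero_right: "c *\<^sub>C (0::'a::complex_vector) = 0"
  by (metis add_cancel_right_right add_0 scaleC_add_right)
lemma cinner_zero_right: "cinner x (0::'a::complex_inner) = 0"
  by (metis add_cancel_right_right add_0 cinner_add_right)
lemma cinner_minus_right: "cinner x (- y) = - cinner x (y::'a::complex_inner)"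
  by (metis scaleC_minus1 cinner_scaleC_right mult_minus1)
lemma cinner_diff_right: "cinner x (y - z) = cinner x y - cinner x (z::'a::complex_inner)"
  unfolding diff_conv_add_uminus cinner_add_right cinner_minus_right by simp
lemma cinner_diff_left: "cinner (x - y) z = cinner x z - cinner y (z::'a::complex_inner)"
  using cinner_commute[of "x-y" z] cinner_commute[of x z] cinner_commute[of y z]
  by (simp add: cinner_diff_right)
lemma norm_scaleC: "norm (c *\<^sub>C (x::'a::complex_inner)) = cmod c * norm x"
proof -
  have "complex_of_real ((norm (c *\<^sub>C x))\<^sup>2) = cnj c * c * cinner x x"
    unfolding norm_cinner by (simp add: cinner_scaleC_left cinner_scaleC_right)
  also have "\<dots> = complex_of_real ((cmod c * norm x)\<^sup>2)"
    by (simp add: norm_cinner[symmetric] complex_norm_square[symmetric] power_mult_distrib mult.commute del: of_real_power)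
  finally have "(norm (c *\<^sub>C x))\<^sup>2 = (cmod c * norm x)\<^sup>2" using of_real_eq_iff by blast
  then show ?thesis by (simp add: power2_eq_iff_nonneg)
qed
lemma cinner_unit_bound:
  fixes e f :: "'a::complex_inner"
  assumes "norm e = 1"
  shows "cmod (cinner e f) \<le> norm f"
proof -
  define c where "c = cinner e f"
  have ee: "cinner e e = 1" using norm_cinner[of e] assms by simp
  have "complex_of_real ((norm (f - c *\<^sub>C e))\<^sup>2) = cinner (f - c *\<^sub>C e) (f - c *\<^sub>C e)"
    by (rule norm_cinner)
  also have "\<dots> = cinner f f - c * cnj c"
  proof -
    have cf: "cinner f e = cnj c" unfolding c_def by (rule cinner_commute)
    show ?thesis
      by (simp add: cinner_diff_left cinner_diff_right cinner_scaleC_left cinner_scaleC_right ee cf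
        flip: c_def)
  qed
  also have "\<dots> = complex_of_real ((norm f)\<^sup>2 - (cmod c)\<^sup>2)"
    by (simp only: of_real_diff norm_cinner complex_norm_square)
  finally have "(norm (f - c *\<^sub>C e))\<^sup>2 = (norm f)\<^sup>2 - (cmod c)\<^sup>2" using of_real_eq_iff by blast
  then have "(cmod c)\<^sup>2 \<le> (norm f)\<^sup>2" using zero_le_power2[of "norm (f - c *\<^sub>C e)"] by linarith
  then show ?thesis unfolding c_def by (simp add: power2_le_iff_abs_le)
qed

lemma scaleC_sum_right: "c *\<^sub>C (\<Sum>i\<in>A. f i) = (\<Sum>i\<in>A. c *\<^sub>C (f i::'a::complex_vector))"
  by (induction A rule: infinite_finite_induct) (simp_all add: scaleC_zero_right scaleC_add_right)

lemma term_lipschitz: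
  fixes e v :: "'a::complex_inner"
  assumes "norm e = 1"
  shows "(norm v)-lipschitz_on UNIV (\<lambda>f. cinner e f *\<^sub>C v)"
proof (rule lipschitz_onI)
  fix x y :: 'a
  have "dist (cinner e x *\<^sub>C v) (cinner e y *\<^sub>C v) = cmod (cinner e (x - y)) * norm v"
    by (simp add: dist_norm scaleC_diff_left[symmetric] norm_scaleC cinner_diff_right)
  also have "\<dots> \<le> norm (x - y) * norm v"
    by (rule mult_right_mono[OF cinner_unit_bound[OF assms]]) simp
  finally show "dist (cinner e x *\<^sub>C v) (cinner e y *\<^sub>C v) \<le> norm v * dist x y"
    by (simp add: dist_norm mult.commute)
qed simp

theorem proposition5p4:
  fixes J :: "'l::chilbert_space \<Rightarrow> 'l"
    and D :: "'f::chilbert_space set"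
    and a adag :: "'l \<Rightarrow> 'f \<Rightarrow> 'f"
    and \<Omega> :: 'f
    and e :: "nat \<Rightarrow> 'l"
    and B :: "'l \<Rightarrow> 'l"
  assumes sep: "separable_space TYPE('l)"
    and infdim: "infinite_dimensional TYPE('l)"
    and conj: "conjugation J"
    and fock: "fock_rep J D a adag \<Omega>"
    and onb: "complete_orthonormal_system e"
    and B_add: "\<forall>f\<in>cspan (range e). \<forall>g\<in>cspan (range e). B (f + g) = B f + B g"
    and B_scale: "\<forall>c. \<forall>f\<in>cspan (range e). B (c *\<^sub>C f) = c *\<^sub>C B f"
    and strong_conv: "\<forall>\<psi>\<in>one_particle_space adag \<Omega>. convergent (\<lambda>M. dGamma_M J a adag e B M \<psi>)"
  shows "bdd_above {norm (B f) | f. f \<in> cspan (range e) \<and> norm f = 1}"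
proof -
  have JJ: "J (J f) = f" for f using conj unfolding conjugation_def by blast
  note fk = fock[unfolded fock_rep_def]
  have D0: "0 \<in> D"
    using fk[THEN conjunct1] by blast
  have Dinv: "\<And>f \<psi>. \<psi> \<in> D \<Longrightarrow> a f \<psi> \<in> D \<and> adag f \<psi> \<in> D"
    using fk[THEN conjunct2, THEN conjunct2, THEN conjunct2, THEN conjunct2, THEN conjunct1] by blast
  have adag_addv: "\<And>f \<phi> \<psi>. \<phi> \<in> D \<Longrightarrow> \<psi> \<in> D \<Longrightarrow> adag f (\<phi> + \<psi>) = adag f \<phi> + adag f \<psi>"
    using fk[THEN conjunct2, THEN conjunct2, THEN conjunct2, THEN conjunct2, THEN conjunct2, THEN conjunct1] by blast
  have adag_scalev: "\<And>f c \<psi>. \<psi> \<in> D \<Longrightarrow> adag f (c *\<^sub>C \<psi>) = c *\<^sub>C adag f \<psi>"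
    using fk[THEN conjunct2, THEN conjunct2, THEN conjunct2, THEN conjunct2, THEN conjunct2, THEN conjunct2, THEN conjunct1] by blast
  have adag_add: "\<And>f g \<psi>. \<psi> \<in> D \<Longrightarrow> adag (f + g) \<psi> = adag f \<psi> + adag g \<psi>"
    using fk[THEN conjunct2, THEN conjunct2, THEN conjunct2, THEN conjunct2, THEN conjunct2, THEN conjunct2, THEN conjunct2, THEN conjunct1] by blast
  have adag_scale: "\<And>c f \<psi>. \<psi> \<in> D \<Longrightarrow> adag (c *\<^sub>C f) \<psi> = c *\<^sub>C adag f \<psi>"
    using fk[THEN conjunct2, THEN conjunct2, THEN conjunct2, THEN conjunct2, THEN conjunct2, THEN conjunct2, THEN conjunct2, THEN conjunct2, THEN conjunct1] by blast
  have ccr: "\<And>f g \<psi>. \<psi> \<in> D \<Longrightarrow> a f (adag g \<psi>) - adag g (a f \<psi>) = cinner (J f) g *\<^sub>C \<psi>"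
    using fk[THEN conjunct2, THEN conjunct2, THEN conjunct2, THEN conjunct2, THEN conjunct2, THEN conjunct2, THEN conjunct2, THEN conjunct2, THEN conjunct2, THEN conjunct2, THEN conjunct2, THEN conjunct1] by blast
  have adj: "\<And>f \<phi> \<psi>. \<phi> \<in> D \<Longrightarrow> \<psi> \<in> D \<Longrightarrow> cinner (a f \<phi>) \<psi> = cinner \<phi> (adag (J f) \<psi>)"
    using fk[THEN conjunct2, THEN conjunct2, THEN conjunct2, THEN conjunct2, THEN conjunct2, THEN conjunct2, THEN conjunct2, THEN conjunct2, THEN conjunct2, THEN conjunct2, THEN conjunct2, THEN conjunct2, THEN conjunct1] by blast
  have OD: "\<Omega> \<in> D"
    using fk[THEN conjunct2, THEN conjunct2, THEN conjunct2, THEN conjunct2, THEN conjunct2, THEN conjunct2, THEN conjunct2, THEN conjunct2, THEN conjunct2, THEN conjunct2, THEN conjunct2, THEN conjunct2, THEN conjunct2, THEN conjunct1] by blast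
  have On: "norm \<Omega> = 1"
    using fk[THEN conjunct2, THEN conjunct2, THEN conjunct2, THEN conjunct2, THEN conjunct2, THEN conjunct2, THEN conjunct2, THEN conjunct2, THEN conjunct2, THEN conjunct2, THEN conjunct2, THEN conjunct2, THEN conjunct2, THEN conjunct2, THEN conjunct1] by blast
  have aO: "\<And>f. a f \<Omega> = 0"
    using fk[THEN conjunct2, THEN conjunct2, THEN conjunct2, THEN conjunct2, THEN conjunct2, THEN conjunct2, THEN conjunct2, THEN conjunct2, THEN conjunct2, THEN conjunct2, THEN conjunct2, THEN conjunct2, THEN conjunct2, THEN conjunct2, THEN conjunct2, THEN conjunct1] by blast
  have adag0: "adag g 0 = 0" for g
    using adag_addv[OF D0 D0, of g] by simp
  have a_adag: "a (J h) (adag g \<Omega>) = cinner h g *\<^sub>C \<Omega>" for h g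
    using ccr[OF OD, of "J h" g] by (simp add: aO adag0 JJ)
  have norm_adag: "norm (adag g \<Omega>) = norm g" for g
  proof -
    have "complex_of_real ((norm (adag g \<Omega>))\<^sup>2) = cinner (adag g \<Omega>) (adag g \<Omega>)"
      by (rule norm_cinner)
    also have "\<dots> = cinner (a (J g) (adag g \<Omega>)) \<Omega>"
      using adj[of "adag g \<Omega>" \<Omega> "J g"] Dinv[OF OD] OD by (simp add: JJ)
    also have "\<dots> = cnj (cinner g g) * cinner \<Omega> \<Omega>"
      by (simp add: a_adag cinner_scaleC_left)
    also have "\<dots> = complex_of_real ((norm g)\<^sup>2)"
      by (simp only: norm_cinner[symmetric] On) simp
    finally have "(norm (adag g \<Omega>))\<^sup>2 = (norm g)\<^sup>2" using of_real_eq_iff by blast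
    then show ?thesis by (simp add: power2_eq_iff_nonneg)
  qed
  have adag_0: "adag 0 \<Omega> = 0"
    using adag_add[OF OD, of 0 0] by simp
  have adag_sum: "adag (\<Sum>i\<in>A. g i) \<Omega> = (\<Sum>i\<in>A. adag (g i) \<Omega>)" for A and g :: "nat \<Rightarrow> 'l"
    by (induction A rule: infinite_finite_induct) (simp_all add: adag_0 adag_add[OF OD])
  define T where "T M f = (\<Sum>j<M. cinner (e j) f *\<^sub>C B (e j))" for M f
  have dG: "dGamma_M J a adag e B M (adag f \<Omega>) = adag (T M f) \<Omega>" for M f
  proof -
    have "dGamma_M J a adag e B M (adag f \<Omega>) = (\<Sum>j<M. adag (B (e j)) (cinner (e j) f *\<^sub>C \<Omega>))"
      unfolding dGamma_M_def by (simp only: a_adag)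
    also have "\<dots> = (\<Sum>j<M. adag (cinner (e j) f *\<^sub>C B (e j)) \<Omega>)"
      by (simp only: adag_scalev[OF OD] adag_scale[OF OD])
    also have "\<dots> = adag (T M f) \<Omega>"
      unfolding T_def by (rule adag_sum[symmetric])
    finally show ?thesis .
  qed
  have en: "norm (e j) = 1" for j
  proof -
    have "cinner (e j) (e j) = 1" using onb unfolding complete_orthonormal_system_def by auto
    then have "complex_of_real ((norm (e j))\<^sup>2) = 1" by (simp only: norm_cinner)
    then have "(norm (e j))\<^sup>2 = 1" by (metis of_real_1 of_real_eq_iff)
    then have "norm (e j) = 1 \<or> norm (e j) = -1" by (simp add: power2_eq_1_iff)
    then show ?thesis using norm_ge_zero[of "e j"] by linarith
  qed
  have onb1: "\<forall>i j. cinner (e i) (e j) = (if i = j then 1 else 0)"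
    using onb unfolding complete_orthonormal_system_def by (rule conjunct1)
  have orth: "cinner (e i) (e j) = (if i = j then 1 else 0)" for i j
    using onb1 by blast
  have bnd: "\<exists>K. \<forall>M. norm (T M f) \<le> K" for f
  proof -
    have "adag f \<Omega> \<in> one_particle_space adag \<Omega>"
      unfolding one_particle_space_def by (rule subsetD[OF closure_subset]) simp
    then have "convergent (\<lambda>M. dGamma_M J a adag e B M (adag f \<Omega>))" using strong_conv by blast
    then have "convergent (\<lambda>M. adag (T M f) \<Omega>)" by (simp only: dG)
    then have "Bseq (\<lambda>M. adag (T M f) \<Omega>)" by (rule convergent_imp_Bseq)
    then obtain K where "0 < K" "\<forall>M. norm (adag (T M f) \<Omega>) \<le> K" by (rule BseqE)
    then show ?thesis by (simp only: norm_adag) blast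
  qed
  have T_add: "T M (f + g) = T M f + T M g" for M f g
    unfolding T_def by (simp add: cinner_add_right scaleC_add_left sum.distrib)
  have T_scale: "T M (c *\<^sub>C f) = c *\<^sub>C T M f" for M c f
    unfolding T_def by (simp add: cinner_scaleC_right scaleC_scaleC scaleC_sum_right)
  have T_zero: "T M 0 = 0" for M
    unfolding T_def by (simp add: cinner_zero_right scaleC_zero_left)
  have T_cont: "continuous_on UNIV (T M)" for M
  proof -
    have "T M = (\<lambda>f. \<Sum>j<M. cinner (e j) f *\<^sub>C B (e j))" by (rule ext) (simp add: T_def)
    moreover have "continuous_on UNIV (\<lambda>f. \<Sum>j<M. cinner (e j) f *\<^sub>C B (e j))"
      by (intro continuous_on_sum lipschitz_on_continuous_on[OF term_lipschitz[OF en]])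
    ultimately show ?thesis by simp
  qed
  have T_ek: "T M (e k) = B (e k)" if "k < M" for M k
  proof -
    have "T M (e k) = (\<Sum>j<M. if j = k then B (e k) else 0)"
      unfolding T_def by (intro sum.cong) (auto simp: orth scaleC_zero_left scaleC_one)
    also have "\<dots> = B (e k)" using that by (simp add: sum.delta)
    finally show ?thesis .
  qed
  have in_span: "(\<Sum>a\<in>A. c a *\<^sub>C a) \<in> cspan (range e)" if "finite A" "A \<subseteq> range e" for A c
    unfolding cspan_def using that by blast
  have single_span: "x \<in> cspan (range e)" if "x \<in> range e" for x
    using in_span[of "{x}" "\<lambda>_. 1"] that by (simp add: scaleC_one)
  have B0: "B 0 = 0"
  proof -
    have "0 \<in> cspan (range e)" using in_span[of "{}"] by simp
    then have "B (0 + 0) = B 0 + B 0" using B_add by blast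
    then show ?thesis by simp
  qed
  have B_lin: "B (\<Sum>a\<in>A. c a *\<^sub>C a) = (\<Sum>a\<in>A. c a *\<^sub>C B a)" if "finite A" "A \<subseteq> range e" for A c
    using that
  proof (induction A rule: finite_induct)
    case empty
    then show ?case by (simp add: B0)
  next
    case (insert x F)
    have xs: "x \<in> cspan (range e)" using insert single_span by blast
    have cx: "c x *\<^sub>C x \<in> cspan (range e)" using in_span[of "{x}" c] insert by simp
    have Fs: "(\<Sum>a\<in>F. c a *\<^sub>C a) \<in> cspan (range e)" using in_span[of F c] insert by simp
    have "B (\<Sum>a\<in>insert x F. c a *\<^sub>C a) = B (c x *\<^sub>C x + (\<Sum>a\<in>F. c a *\<^sub>C a))"
      using insert by simp
    also have "\<dots> = B (c x *\<^sub>C x) + B (\<Sum>a\<in>F. c a *\<^sub>C a)" using B_add cx Fs by blast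
    also have "\<dots> = c x *\<^sub>C B x + (\<Sum>a\<in>F. c a *\<^sub>C B a)" using B_scale xs insert by simp
    finally show ?case using insert by simp
  qed
  have T_lin: "T M (\<Sum>a\<in>A. c a *\<^sub>C a) = (\<Sum>a\<in>A. c a *\<^sub>C T M a)" if "finite A" for A c M
    using that by (induction A rule: finite_induct) (simp_all add: T_zero T_add T_scale)
  have BT: "\<exists>M. B f = T M f" if "f \<in> cspan (range e)" for f
  proof -
    have "\<exists>A c. finite A \<and> A \<subseteq> range e \<and> f = (\<Sum>a\<in>A. c a *\<^sub>C a)"
      using that unfolding cspan_def by simp
    then obtain A c where A: "finite A" "A \<subseteq> range e" and f: "f = (\<Sum>a\<in>A. c a *\<^sub>C a)"
      by (elim exE conjE) (rule that)
    obtain I where I: "finite I" "A = e ` I" using finite_subset_image[OF A] by blast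
    obtain M where M: "I \<subseteq> {..<M}" using finite_nat_bounded[OF I(1)] by blast
    have TB: "T M a = B a" if "a \<in> A" for a
    proof -
      have "a \<in> e ` I" using that I(2) by simp
      then obtain k where k': "a = e k" "k \<in> I" by (rule imageE)
      then have k: "k \<in> I" "a = e k" by simp_all
      then have "k < M" using M by blast
      then show ?thesis using T_ek k(2) by simp
    qed
    have "B f = (\<Sum>a\<in>A. c a *\<^sub>C B a)" unfolding f by (rule B_lin[OF A])
    also have "\<dots> = (\<Sum>a\<in>A. c a *\<^sub>C T M a)"
      by (rule sum.cong) (simp_all add: TB)
    also have "\<dots> = T M f" unfolding f by (rule T_lin[OF A(1), symmetric])
    finally show ?thesis by blast
  qed
  define F where "F n = {f. \<forall>M. norm (T M f) \<le> real n}" for n :: nat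
  have closedF: "closed (F n)" for n
    unfolding F_def
    by (intro closed_Collect_all closed_Collect_le continuous_on_norm T_cont continuous_on_const)
  have unionF: "\<Union>(range F) = UNIV"
  proof -
    have "f \<in> \<Union>(range F)" for f
    proof -
      obtain K where K: "\<forall>M. norm (T M f) \<le> K" using bnd by blast
      have "K \<le> real (nat \<lceil>K\<rceil>)" by linarith
      then have "f \<in> F (nat \<lceil>K\<rceil>)" unfolding F_def using K by (auto intro: order_trans)
      then show ?thesis by blast
    qed
    then show ?thesis by blast
  qed
  obtain n where nint: "interior (F n) \<noteq> {}"
  proof (rule ccontr)
    assume "\<not> thesis"
    then have allE: "\<And>n. interior (F n) = {}" using that by blast
    have "euclidean interior_of \<Union>(range F) = {}"
    proof (rule Baire_category_alt)
      show "completely_metrizable_space (euclidean::'l topology) \<or>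
        locally_compact_space (euclidean::'l topology) \<and> regular_space (euclidean::'l topology)"
        using completely_metrizable_space_euclidean by blast
      show "countable (range F)" by simp
      fix T assume "T \<in> range F"
      then show "closedin euclidean T \<and> euclidean interior_of T = {}"
        using closedF allE closed_closedin by auto
    qed
    then show False using unionF by simp
  qed
  then obtain x0 where "x0 \<in> interior (F n)" by blast
  then obtain r where r: "r > 0" "ball x0 r \<subseteq> F n" using mem_interior by blast
  have x0F: "x0 \<in> F n" using r by auto
  have key: "norm (T M y) \<le> 2 * real n" if "norm y < r" for M y
  proof -
    have "x0 + y \<in> ball x0 r" using that by (simp add: dist_norm)
    then have "x0 + y \<in> F n" using r by blast
    then have h1: "norm (T M (x0 + y)) \<le> real n" unfolding F_def by blast
    have h2: "norm (T M x0) \<le> real n" using x0F unfolding F_def by blast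
    have "T M y = T M (x0 + y) - T M x0" by (simp add: T_add)
    then have "norm (T M y) \<le> norm (T M (x0 + y)) + norm (T M x0)"
      by (metis norm_triangle_ineq4)
    then show ?thesis using h1 h2 by linarith
  qed
  show ?thesis
  proof (rule bdd_aboveI)
    fix x assume "x \<in> {norm (B f) |f. f \<in> cspan (range e) \<and> norm f = 1}"
    then obtain f where f: "f \<in> cspan (range e)" "norm f = 1" and x: "x = norm (B f)" by blast
    obtain M where BM: "B f = T M f" using BT[OF f(1)] by blast
    have "norm (complex_of_real (r/2) *\<^sub>C f) = r / 2" using f r by (simp add: norm_scaleC)
    then have "norm (T M (complex_of_real (r/2) *\<^sub>C f)) \<le> 2 * real n" using r by (intro key) simp
    then have "r / 2 * norm (T M f) \<le> 2 * real n" using r by (simp add: T_scale norm_scaleC)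
    then have "norm (T M f) \<le> 4 * real n / r" using r by (simp add: field_simps)
    then show "x \<le> 4 * real n / r" using x BM by simp
  qed
qed
end
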